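(* Let $X$ be a finite $T_0$ topological space. Then $\Psi(x,y)=|U_y\setminus U_x|$ for all $x,y\in X$.
   Context: For a finite topological space $X$ and $x\in X$, $U_x$ denotes the minimal open set containing $x$ (the intersection of all open sets containing $x$). A nested sequence of open sets around $x$ is a finite sequence $U_0\subsetneq U_1\subsetneq\cdots\subsetneq U_m=X$ of open sets with $U_0=U_x$ such that for each $j$ there is no open set $V$ with $U_j\subsetneq V\subsetneq U_{j+1}$. The furtherness function $\Psi:X\times X\to\{0,1,\dots,|X|-1\}$ is defined by: $\Psi(x,y)$ is the smallest integer $k\ge 0$ such that there exists a nested sequence $(U_j)_{j\ge0}$ of open sets around $x$ with $y\in U_k$. *)

theory Defs
  imports "HOL-Analysis.Analysis"
begin

definition minimal_open :: "'a topology \<Rightarrow> 'a \<Rightarrow> 'a set" where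
  "minimal_open X x = \<Inter> {U. openin X U \<and> x \<in> U}"

definition nested_seq :: "'a topology \<Rightarrow> 'a \<Rightarrow> (nat \<Rightarrow> 'a set) \<Rightarrow> nat \<Rightarrow> bool" where
  "nested_seq X x U m \<longleftrightarrow>
     U 0 = minimal_open X x \<and>
     U m = topspace X \<and>
     (\<forall>j\<le>m. openin X (U j)) \<and>
     (\<forall>j<m. U j \<subset> U (Suc j)) \<and>
     (\<forall>j<m. \<not> (\<exists>V. openin X V \<and> U j \<subset> V \<and> V \<subset> U (Suc j)))"

definition furtherness :: "'a topology \<Rightarrow> 'a \<Rightarrow> 'a \<Rightarrow> nat" where
  "furtherness X x y = (LEAST k. \<exists>U m. nested_seq X x U m \<and> k \<le> m \<and> y \<in> U k)"

end

theory Submission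
  imports Defs
begin

lemma mo_props:
  assumes fin: "finite (topspace X)" and x: "x \<in> topspace X"
  shows "openin X (minimal_open X x)" "x \<in> minimal_open X x"
    "\<And>U. openin X U \<Longrightarrow> x \<in> U \<Longrightarrow> minimal_open X x \<subseteq> U"
    "minimal_open X x \<subseteq> topspace X"
proof -
  let ?F = "{U. openin X U \<and> x \<in> U}"
  have "?F \<subseteq> Pow (topspace X)" using openin_subset by blast
  hence "finite ?F" using fin by (meson finite_Pow_iff finite_subset)
  moreover have "topspace X \<in> ?F" using x by simp
  ultimately show "openin X (minimal_open X x)" unfolding minimal_open_def
    by (intro openin_Inter) auto
  show "x \<in> minimal_open X x" unfolding minimal_open_def by auto
  show "\<And>U. openin X U \<Longrightarrow> x \<in> U \<Longrightarrow> minimal_open X x \<subseteq> U"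
    unfolding minimal_open_def by auto
  show "minimal_open X x \<subseteq> topspace X" using x unfolding minimal_open_def by auto
qed

lemma mo_inj:
  assumes fin: "finite (topspace X)" and t0: "t0_space X"
    and z: "z \<in> topspace X" and w: "w \<in> topspace X"
    and eq: "minimal_open X z = minimal_open X w"
  shows "z = w"
proof (rule ccontr)
  assume "z \<noteq> w"
  then obtain U where U: "openin X U" "z \<notin> U \<longleftrightarrow> w \<in> U"
    using t0 z w unfolding t0_space_def by blast
  show False
  proof (cases "z \<in> U")
    case True
    then have "minimal_open X z \<subseteq> U" using mo_props(3)[OF fin z] U by blast
    then show False using mo_props(2)[OF fin w] eq U True by auto
  next
    case False
    then have "minimal_open X w \<subseteq> U" using mo_props(3)[OF fin w] U by blast
    then show False using mo_props(2)[OF fin z] eq U False by auto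
  qed
qed

lemma min_point:
  assumes fin: "finite (topspace X)" and t0: "t0_space X"
    and A: "openin X A" and D: "openin X D" and AD: "A \<subset> D"
  shows "\<exists>z \<in> D - A. openin X (insert z A)"
proof -
  let ?S = "D - A"
  obtain z0 where "z0 \<in> ?S" using AD by auto
  then obtain z where z: "z \<in> ?S" and zmin: "\<And>w. w \<in> ?S \<Longrightarrow> card (minimal_open X z) \<le> card (minimal_open X w)"
    using ex_has_least_nat[of "\<lambda>z. z \<in> ?S" z0 "\<lambda>z. card (minimal_open X z)"] by blast
  have zt: "z \<in> topspace X" using z D openin_subset by blast
  have sub: "minimal_open X z \<subseteq> insert z A"
  proof
    fix w assume w: "w \<in> minimal_open X z"
    show "w \<in> insert z A"
    proof (rule ccontr)
      assume nw: "w \<notin> insert z A"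
      have "minimal_open X z \<subseteq> D" using mo_props(3)[OF fin zt D] z by auto
      hence wS: "w \<in> ?S" using w nw by auto
      have wt: "w \<in> topspace X" using wS D openin_subset by blast
      have "minimal_open X w \<subseteq> minimal_open X z"
        using mo_props(3)[OF fin wt mo_props(1)[OF fin zt]] w by auto
      moreover have "finite (minimal_open X z)"
        using finite_subset[OF mo_props(4)[OF fin zt] fin] .
      moreover have "card (minimal_open X z) \<le> card (minimal_open X w)" using zmin wS .
      ultimately have "minimal_open X w = minimal_open X z"
        by (meson card_seteq)
      hence "w = z" using mo_inj[OF fin t0 wt zt] by simp
      thus False using nw by simp
    qed
  qed
  have "insert z A = A \<union> minimal_open X z"
    using sub mo_props(2)[OF fin zt] by auto
  moreover have "openin X (A \<union> minimal_open X z)"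
    using A mo_props(1)[OF fin zt] by blast
  ultimately have "openin X (insert z A)" by simp
  thus ?thesis using z by blast
qed

lemma prepend_chain:
  assumes W0: "W 0 = insert z A" and zA: "z \<notin> A" and Aop: "openin X A"
    and Wop: "\<forall>j\<le>n. openin X (W j)"
    and Ws: "\<forall>j<n. \<exists>z. z \<notin> W j \<and> W (Suc j) = insert z (W j)"
  shows "\<exists>W'. W' 0 = A \<and> (\<forall>j. W' (Suc j) = W j) \<and> (\<forall>j\<le>Suc n. openin X (W' j)) \<and>
    (\<forall>j<Suc n. \<exists>z. z \<notin> W' j \<and> W' (Suc j) = insert z (W' j))"
proof -
  define W' where "W' = (\<lambda>j. if j = 0 then A else W (j - 1))"
  have h1: "W' 0 = A" by (simp add: W'_def)
  have h2: "\<forall>j. W' (Suc j) = W j" by (simp add: W'_def)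
  have h3: "\<forall>j\<le>Suc n. openin X (W' j)"
  proof (intro allI impI)
    fix j assume "j \<le> Suc n"
    then show "openin X (W' j)" using Wop Aop by (cases j) (simp_all add: W'_def)
  qed
  have h4: "\<forall>j<Suc n. \<exists>z. z \<notin> W' j \<and> W' (Suc j) = insert z (W' j)"
  proof (intro allI impI)
    fix j assume j: "j < Suc n"
    show "\<exists>z. z \<notin> W' j \<and> W' (Suc j) = insert z (W' j)"
    proof (cases j)
      case 0 then show ?thesis using W0 zA by (auto simp: W'_def)
    next
      case (Suc i)
      then have "i < n" using j by simp
      then show ?thesis using Ws Suc by (simp add: W'_def)
    qed
  qed
  show ?thesis by (intro exI[of _ W'] conjI h1 h2 h3 h4)
qed

lemma card_step:
  assumes "finite B" "z \<in> B" "z \<notin> A" "card (B - A) = Suc n"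
  shows "card (B - insert z A) = n"
proof -
  have "B - insert z A = (B - A) - {z}" by blast
  moreover have "z \<in> B - A" using assms by blast
  ultimately show ?thesis using assms by (simp add: card_Diff_singleton)
qed

lemma chain_exists:
  assumes fin: "finite (topspace X)" and t0: "t0_space X"
  shows "card (B - A) = n \<Longrightarrow> openin X A \<Longrightarrow> openin X C \<Longrightarrow> openin X B \<Longrightarrow> A \<subseteq> C \<Longrightarrow> C \<subseteq> B \<Longrightarrow>
    \<exists>W. W 0 = A \<and> W n = B \<and> W (card (C - A)) = C \<and> (\<forall>j\<le>n. openin X (W j)) \<and>
        (\<forall>j<n. \<exists>z. z \<notin> W j \<and> W (Suc j) = insert z (W j))"
proof (induction n arbitrary: A C)
  case 0
  have fB: "finite B" using finite_subset[OF openin_subset[OF 0(4)] fin] .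
  hence "B - A = {}" using 0(1) by (metis card_0_eq finite_Diff)
  hence AB: "A = B" "C = A" using 0(5,6) by blast+
  show ?case
    by (rule exI[of _ "\<lambda>_. A"]) (simp add: AB 0(2) 0(4))
next
  case (Suc n)
  have fB: "finite B" using finite_subset[OF openin_subset[OF Suc(5)] fin] .
  have "B - A \<noteq> {}" using Suc(2) by (metis Zero_not_Suc card.empty)
  hence AB: "A \<subset> B" using Suc(6,7) by blast
  show ?case
  proof (cases "A = C")
    case True
    obtain z where z: "z \<in> B - A" "openin X (insert z A)"
      using min_point[OF fin t0 Suc(3) Suc(5) AB] by blast
    have zB0: "z \<in> B" and zA0: "z \<notin> A" using z by blast+
    have cn: "card (B - insert z A) = n" using card_step[OF fB zB0 zA0 Suc(2)] .
    have zB: "insert z A \<subseteq> B" using z Suc(7) True by blast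
    have "\<exists>W. W 0 = insert z A \<and> W n = B \<and> W (card (insert z A - insert z A)) = insert z A \<and>
      (\<forall>j\<le>n. openin X (W j)) \<and> (\<forall>j<n. \<exists>z. z \<notin> W j \<and> W (Suc j) = insert z (W j))"
      by (rule Suc.IH[OF cn z(2) z(2) Suc(5) order.refl zB])
    then obtain W where W: "W 0 = insert z A" "W n = B"
      "\<forall>j\<le>n. openin X (W j)" "\<forall>j<n. \<exists>z. z \<notin> W j \<and> W (Suc j) = insert z (W j)"
      by (elim exE conjE) blast
    obtain W' where P: "W' 0 = A" "\<forall>j. W' (Suc j) = W j" "\<forall>j\<le>Suc n. openin X (W' j)"
      "\<forall>j<Suc n. \<exists>z. z \<notin> W' j \<and> W' (Suc j) = insert z (W' j)"
      using prepend_chain[OF W(1) zA0 Suc(3) W(3) W(4)] by (elim exE conjE) blast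
    show ?thesis
    proof (intro exI[of _ W'] conjI)
      show "W' 0 = A" by (rule P(1))
      show "W' (Suc n) = B" using P(2) W(2) by simp
      show "W' (card (C - A)) = C" using P(1) True by simp
      show "\<forall>j\<le>Suc n. openin X (W' j)" by (rule P(3))
      show "\<forall>j<Suc n. \<exists>z. z \<notin> W' j \<and> W' (Suc j) = insert z (W' j)" by (rule P(4))
    qed
  next
    case False
    hence AC: "A \<subset> C" using Suc(6) by blast
    obtain z where z: "z \<in> C - A" "openin X (insert z A)"
      using min_point[OF fin t0 Suc(3) Suc(4) AC] by blast
    have zB: "z \<in> B" using z Suc(7) by blast
    have fC: "finite C" using finite_subset[OF Suc(7) fB] .
    have zA: "z \<notin> A" using z by blast
    have cn: "card (B - insert z A) = n" using card_step[OF fB zB zA Suc(2)] .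
    have sub: "insert z A \<subseteq> C" using z Suc(6) by blast
    have "\<exists>W. W 0 = insert z A \<and> W n = B \<and> W (card (C - insert z A)) = C \<and>
      (\<forall>j\<le>n. openin X (W j)) \<and> (\<forall>j<n. \<exists>z. z \<notin> W j \<and> W (Suc j) = insert z (W j))"
      by (rule Suc.IH[OF cn z(2) Suc(4) Suc(5) sub Suc(7)])
    then obtain W where W: "W 0 = insert z A" "W n = B" "W (card (C - insert z A)) = C"
      "\<forall>j\<le>n. openin X (W j)" "\<forall>j<n. \<exists>z. z \<notin> W j \<and> W (Suc j) = insert z (W j)"
      by (elim exE conjE) blast
    have zC: "z \<in> C" using z by blast
    have cc: "card (C - A) = Suc (card (C - insert z A))"
    proof -
      have "card (C - A) > 0" using zC zA fC by (metis DiffI card_gt_0_iff empty_iff finite_Diff)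
      then obtain m where m: "card (C - A) = Suc m" using gr0_implies_Suc by blast
      show ?thesis using card_step[OF fC zC zA m] m by simp
    qed
    obtain W' where P: "W' 0 = A" "\<forall>j. W' (Suc j) = W j" "\<forall>j\<le>Suc n. openin X (W' j)"
      "\<forall>j<Suc n. \<exists>z. z \<notin> W' j \<and> W' (Suc j) = insert z (W' j)"
      using prepend_chain[OF W(1) zA Suc(3) W(4) W(5)] by (elim exE conjE) blast
    show ?thesis
    proof (intro exI[of _ W'] conjI)
      show "W' 0 = A" by (rule P(1))
      show "W' (Suc n) = B" using P(2) W(2) by simp
      show "W' (card (C - A)) = C" using P(2) W(3) cc by simp
      show "\<forall>j\<le>Suc n. openin X (W' j)" by (rule P(3))
      show "\<forall>j<Suc n. \<exists>z. z \<notin> W' j \<and> W' (Suc j) = insert z (W' j)" by (rule P(4))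
    qed
  qed
qed

lemma cover_card:
  assumes fin: "finite (topspace X)" and t0: "t0_space X"
    and A: "openin X A" and B: "openin X B" and AB: "A \<subset> B"
    and nv: "\<not> (\<exists>V. openin X V \<and> A \<subset> V \<and> V \<subset> B)"
  shows "card B = Suc (card A)"
proof -
  obtain z where z: "z \<in> B - A" "openin X (insert z A)"
    using min_point[OF fin t0 A B AB] by blast
  have n2: "A \<subset> insert z A" "insert z A \<subseteq> B" using z AB by auto
  have "insert z A = B"
  proof (rule ccontr)
    assume "insert z A \<noteq> B"
    hence "insert z A \<subset> B" using n2(2) by (rule_tac psubsetI)
    hence "\<exists>V. openin X V \<and> A \<subset> V \<and> V \<subset> B" using z(2) n2(1) by (intro exI[of _ "insert z A"] conjI)
    thus False using nv by (rule notE[rotated])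
  qed
  moreover have "finite A" using finite_subset[OF openin_subset[OF A] fin] .
  ultimately show ?thesis using z by (metis DiffD2 card_insert_disjoint)
qed

theorem corollary2p14:
  fixes X :: "'a topology"
  assumes "finite (topspace X)" and "t0_space X"
    and "x \<in> topspace X" and "y \<in> topspace X"
  shows "furtherness X x y = card (minimal_open X y - minimal_open X x)"
proof -
  note fin = assms(1) and t0 = assms(2)
  let ?Ux = "minimal_open X x" and ?Uy = "minimal_open X y"
  let ?P = "\<lambda>k. \<exists>U m. nested_seq X x U m \<and> k \<le> m \<and> y \<in> U k"
  let ?k = "card (?Uy - ?Ux)"
  have oX: "openin X ?Ux" "openin X ?Uy" using mo_props(1)[OF fin assms(3)] mo_props(1)[OF fin assms(4)] .
  have ex: "?P ?k"
  proof -
    have sU: "?Ux \<union> ?Uy \<subseteq> topspace X" using mo_props(4)[OF fin assms(3)] mo_props(4)[OF fin assms(4)] by (rule Un_least)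
    have o3: "openin X (?Ux \<union> ?Uy)" using oX by (rule openin_Un)
    have "\<exists>W. W 0 = ?Ux \<and> W (card (topspace X - ?Ux)) = topspace X \<and>
      W (card ((?Ux \<union> ?Uy) - ?Ux)) = ?Ux \<union> ?Uy \<and>
      (\<forall>j\<le>card (topspace X - ?Ux). openin X (W j)) \<and>
      (\<forall>j<card (topspace X - ?Ux). \<exists>z. z \<notin> W j \<and> W (Suc j) = insert z (W j))"
      by (rule chain_exists[OF fin t0 refl oX(1) o3 openin_topspace Un_upper1 sU])
    then obtain W where W: "W 0 = ?Ux" "W (card (topspace X - ?Ux)) = topspace X"
      "W (card ((?Ux \<union> ?Uy) - ?Ux)) = ?Ux \<union> ?Uy"
      "\<forall>j\<le>card (topspace X - ?Ux). openin X (W j)"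
      "\<forall>j<card (topspace X - ?Ux). \<exists>z. z \<notin> W j \<and> W (Suc j) = insert z (W j)"
      by (elim exE conjE) blast
    let ?m = "card (topspace X - ?Ux)"
    have kk: "card ((?Ux \<union> ?Uy) - ?Ux) = ?k" by (simp add: Un_Diff)
    have st: "W j \<subset> W (Suc j) \<and> \<not> (\<exists>V. openin X V \<and> W j \<subset> V \<and> V \<subset> W (Suc j))" if j: "j < ?m" for j
    proof -
      obtain z where z: "z \<notin> W j" "W (Suc j) = insert z (W j)" using W(5) j by blast
      have a: "W j \<subset> W (Suc j)" using z by blast
      have b: "\<not> (\<exists>V. openin X V \<and> W j \<subset> V \<and> V \<subset> W (Suc j))"
      proof
        assume "\<exists>V. openin X V \<and> W j \<subset> V \<and> V \<subset> W (Suc j)"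
        then obtain V where V: "W j \<subset> V" "V \<subset> W (Suc j)" by blast
        then show False unfolding z(2) by blast
      qed
      show ?thesis using a b by blast
    qed
    have st1: "\<forall>j<?m. W j \<subset> W (Suc j)"
      using st by (intro allI impI) (rule conjunct1)
    have st2: "\<forall>j<?m. \<not> (\<exists>V. openin X V \<and> W j \<subset> V \<and> V \<subset> W (Suc j))"
      using st by (intro allI impI) (rule conjunct2)
    have "nested_seq X x W ?m"
      unfolding nested_seq_def by (intro conjI W(1) W(2) W(4) st1 st2)
    moreover have "?k \<le> ?m"
    proof -
      have "?Uy - ?Ux \<subseteq> topspace X - ?Ux" using mo_props(4)[OF fin assms(4)] by blast
      moreover have "finite (topspace X - ?Ux)" using fin by simp
      ultimately show ?thesis by (rule card_mono[rotated])
    qed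
    moreover have "y \<in> W ?k" using W(3) kk mo_props(2)[OF fin assms(4)] by simp
    ultimately show ?thesis by blast
  qed
  have lb: "?k \<le> k" if hP: "?P k" for k
  proof -
    obtain U m where ns: "nested_seq X x U m" and km: "k \<le> m" and yk: "y \<in> U k" using hP by blast
    note nsd = ns[unfolded nested_seq_def]
    have ns1: "U 0 = ?Ux" using nsd by (elim conjE) assumption
    have ns3: "\<forall>j\<le>m. openin X (U j)" using nsd by (elim conjE) assumption
    have ns4: "\<forall>j<m. U j \<subset> U (Suc j)" using nsd by (elim conjE) assumption
    have ns5: "\<forall>j<m. \<not> (\<exists>V. openin X V \<and> U j \<subset> V \<and> V \<subset> U (Suc j))"
      using nsd by (elim conjE) assumption
    have fU: "finite (U j)" if "j \<le> m" for j
    proof -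
      have "openin X (U j)" using ns3 that by blast
      then show ?thesis by (rule finite_subset[OF openin_subset fin])
    qed
    have inv: "j \<le> m \<Longrightarrow> U 0 \<subseteq> U j \<and> card (U j) = card (U 0) + j" for j
    proof (induction j)
      case 0 then show ?case by simp
    next
      case (Suc j)
      have j: "j < m" using Suc by simp
      have o1: "openin X (U j)" using ns3 j by simp
      have o2: "openin X (U (Suc j))" using ns3 Suc(2) by blast
      have ps: "U j \<subset> U (Suc j)" by (rule mp[OF spec[OF ns4, of j] j])
      have nv: "\<not> (\<exists>V. openin X V \<and> U j \<subset> V \<and> V \<subset> U (Suc j))" by (rule mp[OF spec[OF ns5, of j] j])
      have "card (U (Suc j)) = Suc (card (U j))"
        by (rule cover_card[OF fin t0 o1 o2 ps nv])
      moreover have "U 0 \<subseteq> U j \<and> card (U j) = card (U 0) + j" using Suc(1) j by simp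
      ultimately show ?case using ps by auto
    qed
    have "?Uy \<subseteq> U k" using mo_props(3)[OF fin assms(4)] ns3 km yk by blast
    hence "?Uy - ?Ux \<subseteq> U k - U 0" using ns1 by blast
    moreover have "finite (U k - U 0)" using fU[OF km] by simp
    ultimately have "?k \<le> card (U k - U 0)" by (rule card_mono[rotated])
    also have "\<dots> = card (U k) - card (U 0)"
      using inv[OF km] fU[OF km] by (meson card_Diff_subset finite_subset)
    also have "\<dots> = k" using inv[OF km] by simp
    finally show ?thesis .
  qed
  show ?thesis unfolding furtherness_def
    by (rule Least_equality[of ?P, OF ex lb])
qed

end
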